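(* Let $k\ge1$, $\lambda>0$ and $\theta>1$. Then every solution $(x,y)$ with $x,y>0$ of $$x=\lambda\Bigl(\frac{1+x+\theta y}{1+x+y}\Bigr)^k,\qquad y=\lambda\Bigl(\frac{1+\theta x+y}{1+x+y}\Bigr)^k$$ satisfies $x=y$. *)

theory Defs
  imports Complex_Main
begin

end

theory Submission
  imports Defs
begin

lemma aux:
  fixes k :: nat and lambda theta x y :: real
  assumes "k \<ge> 1" and "lambda > 0" and "theta > 1"
    and "x > 0" and "y > 0" and "x > y"
  shows "lambda * ((1 + x + theta * y) / (1 + x + y)) ^ k < lambda * ((1 + theta * x + y) / (1 + x + y)) ^ k"
proof -
  have "(theta - 1) * y < (theta - 1) * x" using assms by simp
  hence "1 + x + theta * y < 1 + theta * x + y" by (simp add: algebra_simps)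
  hence "(1 + x + theta * y) / (1 + x + y) < (1 + theta * x + y) / (1 + x + y)"
    using assms by (simp add: divide_strict_right_mono)
  moreover have "0 \<le> (1 + x + theta * y) / (1 + x + y)" using assms by simp
  ultimately have "((1 + x + theta * y) / (1 + x + y)) ^ k < ((1 + theta * x + y) / (1 + x + y)) ^ k"
    using assms(1) by (intro power_strict_mono) auto
  thus ?thesis using assms(2) by simp
qed

theorem mainTheorem3:
  fixes k :: nat and lambda theta x y :: real
  assumes "k \<ge> 1" and "lambda > 0" and "theta > 1"
    and "x > 0" and "y > 0"
    and "x = lambda * ((1 + x + theta * y) / (1 + x + y)) ^ k"
    and "y = lambda * ((1 + theta * x + y) / (1 + x + y)) ^ k"
  shows "x = y"
proof (rule ccontr)
  assume "x \<noteq> y"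
  then consider "x > y" | "y > x" by linarith
  thus False
  proof cases
    case 1
    from aux[OF assms(1-5) 1] assms(6,7) 1 show False by linarith
  next
    case 2
    have e1: "1 + y + x = 1 + x + y" "1 + y + theta * x = 1 + theta * x + y"
      "1 + theta * y + x = 1 + x + theta * y" by simp_all
    from aux[OF assms(1-3) assms(5) assms(4) 2] assms(6,7) 2 show False
      unfolding e1 by linarith
  qed
qed

end
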